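(* Let $V$ be a Banach $\mathbb O$-bimodule, $T\in\mathscr B_{\mathcal{RO}}(V)$, $v\in\operatorname{Re}V$ and $\phi\in V^{*_{\mathbb O}}$. Set $g(s)=\phi\big((R_s-T)^{\circledcirc-}(v)\big)$ for $s\in\rho^*(T)$. Then for every $J\in\mathbb S$, $g$ is continuously differentiable on the open set $\rho_J^*(T)\subseteq\mathbb C_J$ and, writing $s=x+yJ$, satisfies $\frac{\partial g}{\partial x}(s)+\frac{\partial g}{\partial y}(s)\,J=0$ there; i.e. $g$ is right slice regular on the pull-back resolvent set.
   Context: $\mathbb O$ is the real octonion algebra with basis $e_0=1,\dots,e_7$; $\mathbb S=\{J\in\mathbb O:J^2=-1\}$, $\mathbb C_J=\mathbb R+\mathbb RJ$. An $\mathbb O$-bimodule is a real vector space $M$ with real-bilinear left and right multiplications by $\mathbb O$ (with $1x=x1=x$) whose associators $[p,q,x]=(pq)x-p(qx)$, $[p,x,q]=(px)q-p(xq)$, $[x,p,q]=(xp)q-x(pq)$ satisfy $[p,q,x]=[q,x,p]=[x,p,q]=-[q,p,x]$. Its real part is $\operatorname{Re}M=\{m: pm=mp,\ [p,q,m]=0\ \forall p,q\}$, and every $x$ decomposes uniquely as $\sum_ix_ie_i$ with $x_i\in\operatorname{Re}M$. A Banach $\mathbb O$-bimodule is one with a complete norm with $\|px\|=\|xp\|=|p|\|x\|$; $\mathbb O$ itself is one. $V^{*_{\mathbb O}}$ is the set of continuous octonionic linear functionals $\phi:V\to\mathbb O$ ($\phi(xp)=\phi(x)p$, equivalently $\phi(px)=p\phi(x)$).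 $\mathscr B_{\mathbb R}(V)$: bounded real-linear operators; invertible means invertible in $\mathscr B_{\mathbb R}(V)$; $R_sv=vs$. $\mathscr B_{\mathcal{RO}}(V)$: bounded real-linear $f$ with $\operatorname{Re}(f(x)p-f(xp))=0$ for all $p,x$, where $\operatorname{Re}x$ is the $e_0$-component above. For invertible $S$, $S^{\circledcirc-}=\operatorname{ext}(S^{-1}|_{\operatorname{Re}V})$ where $(\operatorname{ext}h)(\sum_ix_ie_i)=\sum_ih(x_i)e_i$ ($x_i\in\operatorname{Re}V$); in particular $S^{\circledcirc-}(v)=S^{-1}(v)$ for $v\in\operatorname{Re}V$. $S$ is $\mathbb C_J$-extendable power associative if $S^n(w\lambda)=S^n(w)\lambda$ for all $n\ge1$, $w\in\operatorname{Re}V$, $\lambda\in\mathbb C_J$. $\rho_J^*(T)=\{s\in\mathbb C_J: R_s-T$ invertible and $(R_s-T)^{-1}$ $\mathbb C_J$-extendable power associative$\}$ (open in $\mathbb C_J$), $\rho^*(T)=\bigcup_J\rho_J^*(T)$. *)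

theory Defs
  imports "HOL-Analysis.Analysis"
begin

text \<open>Quaternions as pairs of complex numbers, octonions as pairs of quaternions.
  The product norm of Product_Vector is then the Euclidean norm on R^8.\<close>

type_synonym quat = "complex \<times> complex"
type_synonym oct = "quat \<times> quat"

definition qcnj :: "quat \<Rightarrow> quat" where
  "qcnj p = (cnj (fst p), - snd p)"

definition qmul :: "quat \<Rightarrow> quat \<Rightarrow> quat" where
  "qmul p q = (fst p * fst q - cnj (snd q) * snd p, snd q * fst p + snd p * cnj (fst q))"

definition ocnj :: "oct \<Rightarrow> oct" where
  "ocnj p = (qcnj (fst p), - snd p)"

definition omul :: "oct \<Rightarrow> oct \<Rightarrow> oct" where
  "omul p q = (qmul (fst p) (fst q) - qmul (qcnj (snd q)) (snd p),
               qmul (snd q) (fst p) + qmul (snd p) (qcnj (fst q)))"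

definition oone :: oct where
  "oone = ((1, 0), (0, 0))"

definition oe :: "nat \<Rightarrow> oct" where
  "oe i = (if i = 0 then ((1, 0), (0, 0))
      else if i = 1 then ((\<i>, 0), (0, 0))
      else if i = 2 then ((0, 1), (0, 0))
      else if i = 3 then ((0, \<i>), (0, 0))
      else if i = 4 then ((0, 0), (1, 0))
      else if i = 5 then ((0, 0), (\<i>, 0))
      else if i = 6 then ((0, 0), (0, 1))
      else if i = 7 then ((0, 0), (0, \<i>))
      else 0)"

definition osphere :: "oct set" where
  "osphere = {J. omul J J = - oone}"

definition CJ :: "oct \<Rightarrow> oct set" where
  "CJ J = {x *\<^sub>R oone + y *\<^sub>R J | x y. True}"

definition assocL :: "(oct \<Rightarrow> 'v::real_vector \<Rightarrow> 'v) \<Rightarrow> oct \<Rightarrow> oct \<Rightarrow> 'v \<Rightarrow> 'v" where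
  "assocL lm p q x = lm (omul p q) x - lm p (lm q x)"

definition assocM :: "(oct \<Rightarrow> 'v::real_vector \<Rightarrow> 'v) \<Rightarrow> ('v \<Rightarrow> oct \<Rightarrow> 'v) \<Rightarrow> oct \<Rightarrow> 'v \<Rightarrow> oct \<Rightarrow> 'v" where
  "assocM lm rm p x q = rm (lm p x) q - lm p (rm x q)"

definition assocR :: "('v::real_vector \<Rightarrow> oct \<Rightarrow> 'v) \<Rightarrow> 'v \<Rightarrow> oct \<Rightarrow> oct \<Rightarrow> 'v" where
  "assocR rm x p q = rm (rm x p) q - rm x (omul p q)"

definition oct_bimodule :: "(oct \<Rightarrow> 'v::real_vector \<Rightarrow> 'v) \<Rightarrow> ('v \<Rightarrow> oct \<Rightarrow> 'v) \<Rightarrow> bool" where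
  "oct_bimodule lm rm \<longleftrightarrow>
     (\<forall>p. linear (lm p)) \<and> (\<forall>x. linear (\<lambda>p. lm p x)) \<and>
     (\<forall>p. linear (\<lambda>x. rm x p)) \<and> (\<forall>x. linear (rm x)) \<and>
     (\<forall>x. lm oone x = x) \<and> (\<forall>x. rm x oone = x) \<and>
     (\<forall>p q x. assocL lm p q x = assocM lm rm q x p \<and>
              assocM lm rm q x p = assocR rm x p q \<and>
              assocR rm x p q = - assocL lm q p x)"

definition banach_oct_bimodule :: "(oct \<Rightarrow> 'v::banach \<Rightarrow> 'v) \<Rightarrow> ('v \<Rightarrow> oct \<Rightarrow> 'v) \<Rightarrow> bool" where
  "banach_oct_bimodule lm rm \<longleftrightarrow> oct_bimodule lm rm \<and>
     (\<forall>p x. norm (lm p x) = norm p * norm x \<and> norm (rm x p) = norm p * norm x)"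

definition ReM :: "(oct \<Rightarrow> 'v::real_vector \<Rightarrow> 'v) \<Rightarrow> ('v \<Rightarrow> oct \<Rightarrow> 'v) \<Rightarrow> 'v set" where
  "ReM lm rm = {m. (\<forall>p. lm p m = rm m p) \<and> (\<forall>p q. assocL lm p q m = 0)}"

definition comps :: "(oct \<Rightarrow> 'v::real_vector \<Rightarrow> 'v) \<Rightarrow> ('v \<Rightarrow> oct \<Rightarrow> 'v) \<Rightarrow> 'v \<Rightarrow> nat \<Rightarrow> 'v" where
  "comps lm rm x = (THE c. (\<forall>i<8. c i \<in> ReM lm rm) \<and> (\<forall>i\<ge>8. c i = 0) \<and>
                         x = (\<Sum>i<8. rm (c i) (oe i)))"

definition reprt :: "(oct \<Rightarrow> 'v::real_vector \<Rightarrow> 'v) \<Rightarrow> ('v \<Rightarrow> oct \<Rightarrow> 'v) \<Rightarrow> 'v \<Rightarrow> 'v" where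
  "reprt lm rm x = comps lm rm x 0"

definition oct_dual :: "(oct \<Rightarrow> 'v::real_normed_vector \<Rightarrow> 'v) \<Rightarrow> ('v \<Rightarrow> oct \<Rightarrow> 'v) \<Rightarrow> ('v \<Rightarrow> oct) set" where
  "oct_dual lm rm = {\<phi>. bounded_linear \<phi> \<and> (\<forall>x p. \<phi> (rm x p) = omul (\<phi> x) p)}"

definition BRO :: "(oct \<Rightarrow> 'v::real_normed_vector \<Rightarrow> 'v) \<Rightarrow> ('v \<Rightarrow> oct \<Rightarrow> 'v) \<Rightarrow> ('v \<Rightarrow> 'v) set" where
  "BRO lm rm = {f. bounded_linear f \<and> (\<forall>p x. reprt lm rm (rm (f x) p - f (rm x p)) = 0)}"

definition invertible_op :: "('v::real_normed_vector \<Rightarrow> 'v) \<Rightarrow> bool" where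
  "invertible_op S \<longleftrightarrow> bounded_linear S \<and>
     (\<exists>S'. bounded_linear S' \<and> S' \<circ> S = id \<and> S \<circ> S' = id)"

definition ext_op :: "(oct \<Rightarrow> 'v::real_vector \<Rightarrow> 'v) \<Rightarrow> ('v \<Rightarrow> oct \<Rightarrow> 'v) \<Rightarrow> ('v \<Rightarrow> 'v) \<Rightarrow> 'v \<Rightarrow> 'v" where
  "ext_op lm rm h x = (\<Sum>i<8. rm (h (comps lm rm x i)) (oe i))"

text \<open>S^{circledcirc-} = ext (S^{-1} restricted to Re V).\<close>
definition circ_inv :: "(oct \<Rightarrow> 'v::real_vector \<Rightarrow> 'v) \<Rightarrow> ('v \<Rightarrow> oct \<Rightarrow> 'v) \<Rightarrow> ('v \<Rightarrow> 'v) \<Rightarrow> 'v \<Rightarrow> 'v" where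
  "circ_inv lm rm S = ext_op lm rm (inv S)"

definition CJ_ext_pow_assoc :: "(oct \<Rightarrow> 'v::real_vector \<Rightarrow> 'v) \<Rightarrow> ('v \<Rightarrow> oct \<Rightarrow> 'v) \<Rightarrow> oct \<Rightarrow> ('v \<Rightarrow> 'v) \<Rightarrow> bool" where
  "CJ_ext_pow_assoc lm rm J S \<longleftrightarrow>
     (\<forall>n\<ge>1. \<forall>w\<in>ReM lm rm. \<forall>c\<in>CJ J. (S ^^ n) (rm w c) = rm ((S ^^ n) w) c)"

definition rhoJ :: "(oct \<Rightarrow> 'v::real_normed_vector \<Rightarrow> 'v) \<Rightarrow> ('v \<Rightarrow> oct \<Rightarrow> 'v) \<Rightarrow> ('v \<Rightarrow> 'v) \<Rightarrow> oct \<Rightarrow> oct set" where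
  "rhoJ lm rm T J = {s \<in> CJ J. invertible_op (\<lambda>w. rm w s - T w) \<and>
       CJ_ext_pow_assoc lm rm J (inv (\<lambda>w. rm w s - T w))}"

definition rho :: "(oct \<Rightarrow> 'v::real_normed_vector \<Rightarrow> 'v) \<Rightarrow> ('v \<Rightarrow> oct \<Rightarrow> 'v) \<Rightarrow> ('v \<Rightarrow> 'v) \<Rightarrow> oct set" where
  "rho lm rm T = (\<Union>J\<in>osphere. rhoJ lm rm T J)"

end

theory Submission
  imports Defs "HOL-Analysis.Analysis"
begin

lemma omul_minus_left: "omul (- p) q = - omul p q"
  by (cases p, cases q) (simp add: omul_def qmul_def qcnj_def algebra_simps)
lemma omul_minus_one: "omul p (- oone) = - p"
  by (cases p) (simp add: omul_def qmul_def qcnj_def oone_def prod_eq_iff)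

lemma sum8: "(\<Sum>j<(8::nat). f j) = f 0 + f 1 + f 2 + f 3 + f 4 + f 5 + f 6 + (f 7 :: 'a::comm_monoid_add)"
  by (simp add: eval_nat_numeral lessThan_Suc add_ac)
lemma oct_table: "i < 8 \<Longrightarrow> k < 8 \<Longrightarrow>
   (\<Sum>j<8. omul (oe j) (omul (omul (oe i) (ocnj (oe k))) (ocnj (oe j))))
     + 4 *\<^sub>R omul (oe i) (ocnj (oe k)) = (if i = k then 12 else 0) *\<^sub>R oone"
  unfolding sum8
  apply (simp add: less_Suc_eq eval_nat_numeral)
  apply (elim disjE)
  by (simp_all add: oe_def omul_def qmul_def qcnj_def ocnj_def oone_def complex_eq_iff zero_prod_def)

lemma omul_alt: "omul (omul p q) q = omul p (omul q q)"
  by (cases p, cases q) (auto simp: omul_def qmul_def qcnj_def complex_eq_iff algebra_simps)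


lemma oe0: "oe 0 = oone" by (simp add: oe_def oone_def)

context
  fixes lm :: "oct \<Rightarrow> 'v::real_vector \<Rightarrow> 'v" and rm :: "'v \<Rightarrow> oct \<Rightarrow> 'v"
  assumes bm: "oct_bimodule lm rm"
begin

lemma lin_lm: "linear (lm p)" using bm unfolding oct_bimodule_def by blast
lemma lin_rm1: "linear (\<lambda>x. rm x p)" using bm unfolding oct_bimodule_def by blast
lemma lin_rm2: "linear (rm x)" using bm unfolding oct_bimodule_def by blast
lemma rm_one: "rm x oone = x" using bm unfolding oct_bimodule_def by blast
lemma ax: "assocL lm p q x = assocM lm rm q x p \<and> assocM lm rm q x p = assocR rm x p q \<and>
     assocR rm x p q = - assocL lm q p x" using bm unfolding oct_bimodule_def by blast

lemma rmJJ: "rm (rm x J) J = rm x (omul J J)"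
proof -
  have "assocR rm x J J = - assocR rm x J J" using ax[of J J x] by metis
  then have "(2::real) *\<^sub>R assocR rm x J J = 0" by (metis scaleR_2 add.right_inverse)
  then have "assocR rm x J J = 0" by simp
  then show ?thesis unfolding assocR_def by simp
qed

lemma ReM_comm: "d \<in> ReM lm rm \<Longrightarrow> lm p d = rm d p" unfolding ReM_def by blast
lemma ReM_as: "d \<in> ReM lm rm \<Longrightarrow> assocL lm p q d = 0" unfolding ReM_def by blast

lemma ReM_R1: "d \<in> ReM lm rm \<Longrightarrow> rm (rm d p) q = rm d (omul p q)"
proof -
  assume d: "d \<in> ReM lm rm"
  have "assocR rm d p q = 0" using ax[of p q d] ReM_as[OF d, of p q] by metis
  then show ?thesis unfolding assocR_def by simp
qed

lemma ReM_R2: "d \<in> ReM lm rm \<Longrightarrow> lm q (rm d p) = rm d (omul q p)"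
proof -
  assume d: "d \<in> ReM lm rm"
  have "assocM lm rm q d p = 0" using ax[of p q d] ReM_as[OF d, of p q] by metis
  then have "lm q (rm d p) = rm (lm q d) p" unfolding assocM_def by simp
  also have "\<dots> = rm (rm d q) p" using ReM_comm[OF d] by simp
  finally show ?thesis using ReM_R1[OF d] by simp
qed

lemma ReM_0: "0 \<in> ReM lm rm"
  unfolding ReM_def assocL_def mem_Collect_eq
  by (intro conjI allI) (simp_all add: linear_0[OF lin_lm] linear_0[OF lin_rm1])

lemma ReM_diff: assumes a: "a \<in> ReM lm rm" and b: "b \<in> ReM lm rm" shows "a - b \<in> ReM lm rm"
  unfolding ReM_def mem_Collect_eq
proof (intro conjI allI)
  fix p show "lm p (a - b) = rm (a - b) p"
    using ReM_comm[OF a, of p] ReM_comm[OF b, of p] by (simp add: linear_diff[OF lin_lm] linear_diff[OF lin_rm1])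
next
  fix p q show "assocL lm p q (a - b) = 0"
    using ReM_as[OF a, of p q] ReM_as[OF b, of p q] unfolding assocL_def
    by (simp add: linear_diff[OF lin_lm] linear_diff[OF lin_rm1] algebra_simps)
qed

definition Qk :: "nat \<Rightarrow> 'v \<Rightarrow> 'v" where
  "Qk k x = (\<Sum>j<8. lm (oe j) (rm (rm x (ocnj (oe k))) (ocnj (oe j)))) + 4 *\<^sub>R rm x (ocnj (oe k))"

lemma Qk_linear: "linear (Qk k)"
proof -
  have l: "linear (\<lambda>x. lm a (rm (rm x b) c))" for a b c
    using linear_compose[OF linear_compose[OF lin_rm1 lin_rm1] lin_lm] by (simp add: o_def)
  have 1: "linear (\<lambda>x. \<Sum>j<8. lm (oe j) (rm (rm x (ocnj (oe k))) (ocnj (oe j))))"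
    by (rule linear_compose_sum) (use l in blast)
  have 2: "linear (\<lambda>x. 4 *\<^sub>R rm x (ocnj (oe k)))"
    unfolding linear_iff using linear_add[OF lin_rm1] linear_scale[OF lin_rm1]
    by (simp add: scaleR_add_right)
  show ?thesis unfolding Qk_def[abs_def] using linear_compose_add[OF 1 2] by simp
qed

lemma Qk_rm: assumes d: "d \<in> ReM lm rm" and i: "i < 8" and k: "k < 8"
  shows "Qk k (rm d (oe i)) = (if i = k then 12 else 0) *\<^sub>R d"
proof -
  have "Qk k (rm d (oe i)) = (\<Sum>j<8. rm d (omul (oe j) (omul (omul (oe i) (ocnj (oe k))) (ocnj (oe j)))))
     + 4 *\<^sub>R rm d (omul (oe i) (ocnj (oe k)))"
    unfolding Qk_def by (simp add: ReM_R1[OF d] ReM_R2[OF d])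
  also have "\<dots> = rm d ((\<Sum>j<8. omul (oe j) (omul (omul (oe i) (ocnj (oe k))) (ocnj (oe j))))
     + 4 *\<^sub>R omul (oe i) (ocnj (oe k)))"
    by (simp add: linear_add[OF lin_rm2] linear_scale[OF lin_rm2] linear_sum[OF lin_rm2])
  also have "\<dots> = rm d ((if i = k then 12 else 0) *\<^sub>R oone)" using oct_table[OF i k] by simp
  also have "\<dots> = (if i = k then 12 else 0) *\<^sub>R d" by (simp add: linear_scale[OF lin_rm2] rm_one)
  finally show ?thesis .
qed

lemma decomp_unique:
  assumes c: "\<forall>i<8. c i \<in> ReM lm rm" and c': "\<forall>i<8. c' i \<in> ReM lm rm"
    and eq: "(\<Sum>i<8. rm (c i) (oe i)) = (\<Sum>i<8. rm (c' i) (oe i))" and k: "k < 8"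
  shows "c k = c' k"
proof -
  define d where "d i = c i - c' i" for i
  have d: "d i \<in> ReM lm rm" if "i < 8" for i using c c' that ReM_diff by (simp add: d_def)
  have "(\<Sum>i<8. rm (d i) (oe i)) = 0"
    using eq by (simp add: d_def linear_diff[OF lin_rm1] sum_subtractf)
  then have "Qk k (\<Sum>i<8. rm (d i) (oe i)) = 0" using linear_0[OF Qk_linear] by simp
  then have "(\<Sum>i<8. Qk k (rm (d i) (oe i))) = 0" by (simp add: linear_sum[OF Qk_linear])
  moreover have "(\<Sum>i<8. Qk k (rm (d i) (oe i))) = (\<Sum>i<8. (if i = k then 12 else 0) *\<^sub>R d i)"
    by (rule sum.cong) (auto simp: Qk_rm[OF d] k)
  moreover have "(\<Sum>i<(8::nat). (if i = k then 12 else 0) *\<^sub>R d i) = 12 *\<^sub>R d k"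
    using k by (simp add: if_distrib[of "\<lambda>r. r *\<^sub>R _"] cong: if_cong)
  ultimately have "12 *\<^sub>R d k = 0" by simp
  then show ?thesis by (simp add: d_def)
qed

lemma comps_Re: assumes v: "v \<in> ReM lm rm"
  shows "comps lm rm v = (\<lambda>i. if i = 0 then v else 0)"
  unfolding comps_def
proof (rule the_equality)
  let ?f = "\<lambda>i::nat. if i = 0 then v else 0"
  have "(\<Sum>i<8. rm (?f i) (oe i)) = (\<Sum>i<(8::nat). if i = 0 then v else 0)"
    by (rule sum.cong) (auto simp: oe0 rm_one linear_0[OF lin_rm1])
  also have "\<dots> = v" by (simp add: sum.delta)
  finally show "(\<forall>i<8. ?f i \<in> ReM lm rm) \<and> (\<forall>i\<ge>8. ?f i = 0) \<and> v = (\<Sum>i<8. rm (?f i) (oe i))"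
    using v ReM_0 by auto
next
  fix c assume h: "(\<forall>i<8. c i \<in> ReM lm rm) \<and> (\<forall>i\<ge>8. c i = (0::'v)) \<and> v = (\<Sum>i<8. rm (c i) (oe i))"
  let ?f = "\<lambda>i::nat. if i = 0 then v else 0"
  have f: "\<forall>i<8. ?f i \<in> ReM lm rm" using v ReM_0 by auto
  have "(\<Sum>i<8. rm (?f i) (oe i)) = (\<Sum>i<(8::nat). if i = 0 then v else 0)"
    by (rule sum.cong) (auto simp: oe0 rm_one linear_0[OF lin_rm1])
  also have "\<dots> = v" by (simp add: sum.delta)
  finally have "(\<Sum>i<8. rm (c i) (oe i)) = (\<Sum>i<8. rm (?f i) (oe i))" using h by simp
  then have "c i = ?f i" if "i < 8" for i using decomp_unique[OF _ f _ that] h by blast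
  moreover have "c i = ?f i" if "\<not> i < 8" for i using h that by auto
  ultimately show "c = ?f" by (metis ext)
qed

end


lemma inv_facts:
  assumes "invertible_op A"
  shows "bounded_linear (inv A)" "\<And>w. inv A (A w) = w" "\<And>w. A (inv A w) = w"
proof -
  obtain S where S: "bounded_linear S" "S \<circ> A = id" "A \<circ> S = id"
    using assms unfolding invertible_op_def by blast
  have e: "inv A = S" using inv_unique_comp[OF S(3) S(2)] .
  show "bounded_linear (inv A)" using e S(1) by simp
  show "\<And>w. inv A (A w) = w" "\<And>w. A (inv A w) = w"
    using e S(2,3) by (metis comp_apply id_apply)+
qed

lemma fix_in:
  fixes S D :: "'v::banach \<Rightarrow> 'v"
  assumes S: "linear S" and D: "linear D"
    and SM: "\<And>w. norm (S w) \<le> M * norm w" and Dd: "\<And>w. norm (D w) \<le> d * norm w"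
    and Md: "M * d \<le> 1/2" and M0: "0 \<le> M" and d0: "0 \<le> d"
    and G: "closed G" "subspace G" "\<And>u. u \<in> G \<Longrightarrow> S u \<in> G" "\<And>u. u \<in> G \<Longrightarrow> D u \<in> G"
    and y: "y \<in> G"
  shows "\<exists>u\<in>G. u = S y - S (D u)"
proof -
  have "\<exists>!u\<in>G. S y - S (D u) = u"
  proof (rule Banach_fix[where c="1/2"])
    show "complete G" using G(1) complete_eq_closed by blast
    show "G \<noteq> {}" using y by blast
    show "(\<lambda>u. S y - S (D u)) ` G \<subseteq> G" using G y by (auto intro!: subspace_diff)
    fix a b assume "a \<in> G" "b \<in> G"
    have "dist (S y - S (D a)) (S y - S (D b)) = norm (S (D (b - a)))"
      by (simp add: dist_norm linear_diff[OF S] linear_diff[OF D])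
    also have "\<dots> \<le> M * norm (D (b - a))" by (rule SM)
    also have "\<dots> \<le> M * (d * norm (b - a))" by (rule mult_left_mono[OF Dd M0])
    also have "\<dots> = (M * d) * dist a b" by (simp add: dist_norm norm_minus_commute)
    also have "\<dots> \<le> 1/2 * dist a b" by (rule mult_right_mono[OF Md]) simp
    finally show "dist (S y - S (D a)) (S y - S (D b)) \<le> 1/2 * dist a b" .
  qed simp_all
  then show ?thesis by metis
qed

lemma pert:
  fixes A S D :: "'v::banach \<Rightarrow> 'v"
  assumes A: "bounded_linear A" and S: "bounded_linear S" and SA: "\<And>w. S (A w) = w" and AS: "\<And>w. A (S w) = w"
    and D: "bounded_linear D"
    and SM: "\<And>w. norm (S w) \<le> M * norm w" and Dd: "\<And>w. norm (D w) \<le> d * norm w"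
    and Md: "M * d \<le> 1/2" and M0: "0 \<le> M" and d0: "0 \<le> d"
  shows "invertible_op (\<lambda>w. A w + D w)"
    and "\<And>y. norm (inv (\<lambda>w. A w + D w) y) \<le> 2 * M * norm y"
    and "\<And>u y. u = S y - S (D u) \<Longrightarrow> u = inv (\<lambda>w. A w + D w) y"
proof -
  let ?A = "\<lambda>w. A w + D w"
  note lS = bounded_linear.linear[OF S] and lD = bounded_linear.linear[OF D] and lA = bounded_linear.linear[OF A]
  have uniq: "u1 = u2" if "u1 = S y - S (D u1)" "u2 = S y - S (D u2)" for u1 u2 y
  proof -
    have "u1 - u2 = S (D (u2 - u1))" using that
      by (metis (no_types, lifting) diff_diff_eq2 diff_diff_eq diff_add_cancel linear_diff[OF lS] linear_diff[OF lD] add_diff_cancel_left')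
    then have "norm (u1 - u2) \<le> M * norm (D (u2 - u1))" using SM by metis
    also have "\<dots> \<le> M * (d * norm (u2 - u1))" by (rule mult_left_mono[OF Dd M0])
    also have "\<dots> = (M * d) * norm (u1 - u2)" by (simp add: norm_minus_commute)
    also have "\<dots> \<le> 1/2 * norm (u1 - u2)" by (rule mult_right_mono[OF Md]) simp
    finally show ?thesis by simp
  qed
  have ex: "\<exists>u. u = S y - S (D u)" for y
    using fix_in[OF lS lD SM Dd Md M0 d0 closed_UNIV subspace_UNIV] by blast
  define S' where "S' y = (SOME u. u = S y - S (D u))" for y
  have S'eq: "S' y = S y - S (D (S' y))" for y
    unfolding S'_def using someI_ex[OF ex[of y]] .
  have solve: "?A u = y" if "u = S y - S (D u)" for u y
  proof -
    have "A u = A (S y) - A (S (D u))" using that linear_diff[OF lA] by metis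
    then show ?thesis by (simp add: AS)
  qed
  have AS': "?A (S' y) = y" for y using solve[OF S'eq] .
  have S'A: "S' (?A u) = u" for u
  proof -
    have "u = S (?A u) - S (D u)" by (simp add: linear_add[OF lS] SA)
    then show ?thesis using uniq[OF S'eq] by metis
  qed
  have lA': "linear ?A" using lA lD by (simp add: linear_compose_add)
  have lS': "linear S'"
  proof (rule linearI)
    fix a b show "S' (a + b) = S' a + S' b"
      by (metis AS' S'A linear_add[OF lA'])
  next
    fix r :: real and a show "S' (r *\<^sub>R a) = r *\<^sub>R S' a"
      by (metis AS' S'A linear_scale[OF lA'])
  qed
  have bnd: "norm (S' y) \<le> 2 * M * norm y" for y
  proof -
    have "norm (S' y) \<le> norm (S y) + norm (S (D (S' y)))" using S'eq[of y] by (metis norm_triangle_ineq4)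
    also have "\<dots> \<le> M * norm y + M * norm (D (S' y))" using SM by (intro add_mono) auto
    also have "M * norm (D (S' y)) \<le> M * (d * norm (S' y))" by (rule mult_left_mono[OF Dd M0])
    also have "M * (d * norm (S' y)) \<le> 1/2 * norm (S' y)"
      using mult_right_mono[OF Md, of "norm (S' y)"] by (simp add: mult.assoc)
    finally show ?thesis by simp
  qed
  have bS': "bounded_linear S'"
    using lS' bnd by (intro bounded_linear_intro[where K="2*M"]) (auto simp: linear_add linear_scale mult.commute)
  have invA: "inv ?A = S'"
    by (rule inv_unique_comp) (auto simp: fun_eq_iff AS' S'A)
  show "invertible_op ?A"
    unfolding invertible_op_def
    using bounded_linear_add[OF A D] bS' by (auto intro!: exI[of _ S'] simp: fun_eq_iff AS' S'A)
  show "norm (inv ?A y) \<le> 2 * M * norm y" for y using bnd invA by simp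
  show "u = inv ?A y" if "u = S y - S (D u)" for u y
    using uniq[OF that S'eq] invA by simp
qed



definition Aop :: "('v::real_vector \<Rightarrow> 'v) \<Rightarrow> ('v \<Rightarrow> 'v) \<Rightarrow> real \<times> real \<Rightarrow> 'v \<Rightarrow> 'v" where
  "Aop RJ T z = (\<lambda>w. fst z *\<^sub>R w + snd z *\<^sub>R RJ w - T w)"
definition Dop :: "('v::real_vector \<Rightarrow> 'v) \<Rightarrow> real \<times> real \<Rightarrow> 'v \<Rightarrow> 'v" where
  "Dop RJ k = (\<lambda>w. fst k *\<^sub>R w + snd k *\<^sub>R RJ w)"
definition goodz :: "('v::real_normed_vector \<Rightarrow> 'v) \<Rightarrow> ('v \<Rightarrow> 'v) \<Rightarrow> 'v set \<Rightarrow> real \<times> real \<Rightarrow> bool" where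
  "goodz RJ T Rs z \<longleftrightarrow> invertible_op (Aop RJ T z) \<and>
     (\<forall>n\<ge>1. \<forall>w\<in>Rs. (inv (Aop RJ T z) ^^ n) (RJ w) = RJ ((inv (Aop RJ T z) ^^ n) w))"

lemma bl_pow: fixes S :: "'a::real_normed_vector \<Rightarrow> 'a"
  shows "bounded_linear S \<Longrightarrow> bounded_linear (S ^^ n)"
proof (induction n)
  case 0
  show ?case by (simp add: id_def)
next
  case (Suc n) then show ?case using bounded_linear_compose[of S "S^^n"] by (simp add: o_def)
qed

lemma deriv_from_quad:
  fixes f :: "'a::real_normed_vector \<Rightarrow> 'b::real_normed_vector"
  assumes L: "bounded_linear L" and e: "e > 0"
    and b: "\<And>h. norm h < e \<Longrightarrow> norm (f (x + h) - f x - L h) \<le> C * (norm h)\<^sup>2"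
  shows "(f has_derivative L) (at x)"
proof -
  have "((\<lambda>h. norm (f (x + h) - f x - L h) / norm h) \<longlongrightarrow> 0) (at 0)"
  proof (rule Lim_null_comparison)
    have key: "norm (norm (f (x + h) - f x - L h) / norm h) \<le> C * norm h" if "h \<noteq> 0" "norm h < e" for h
    proof -
      have n: "norm h > 0" using that by auto
      have "norm (f (x + h) - f x - L h) \<le> (C * norm h) * norm h"
        using b[OF that(2)] by (simp add: power2_eq_square mult.assoc)
      then show ?thesis using n by (simp add: divide_le_eq)
    qed
    show "eventually (\<lambda>h. norm (norm (f (x + h) - f x - L h) / norm h) \<le> C * norm h) (at 0)"
      unfolding eventually_at using e key by (auto intro!: exI[of _ e])
    have "((\<lambda>h::'a. C * norm h) \<longlongrightarrow> C * norm (0::'a)) (at 0)"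
      by (intro tendsto_intros)
    then show "((\<lambda>h::'a. C * norm h) \<longlongrightarrow> 0) (at 0)" by simp
  qed
  then show ?thesis using L by (simp add: has_derivative_at)
qed

locale resolv =
  fixes RJ :: "'v::banach \<Rightarrow> 'v" and T :: "'v \<Rightarrow> 'v" and Rs :: "'v set"
  assumes RJ_bl: "bounded_linear RJ" and RJJ: "\<And>w. RJ (RJ w) = - w" and T_bl: "bounded_linear T"
begin

lemma lRJ: "linear RJ" using RJ_bl bounded_linear.linear by blast

lemma Dop_bl: "bounded_linear (Dop RJ k)"
  unfolding Dop_def
  by (intro bounded_linear_add bounded_linear_compose[OF bounded_linear_scaleR_right RJ_bl]
      bounded_linear_scaleR_right)

lemma Aop_bl: "bounded_linear (Aop RJ T z)"
  unfolding Aop_def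
  by (intro bounded_linear_sub bounded_linear_add bounded_linear_compose[OF bounded_linear_scaleR_right RJ_bl]
      bounded_linear_scaleR_right T_bl)

lemma Dop_RJ: "Dop RJ k (RJ u) = RJ (Dop RJ k u)"
  unfolding Dop_def by (simp add: linear_add[OF lRJ] linear_scale[OF lRJ])

lemma Aop_shift: "Aop RJ T z' = (\<lambda>w. Aop RJ T z w + Dop RJ (z' - z) w)"
  unfolding Aop_def Dop_def by (auto simp: fun_eq_iff scaleR_diff_left algebra_simps)

lemma Dop_bound: "norm (Dop RJ k w) \<le> ((1 + onorm RJ) * norm k) * norm w"
proof -
  obtain a b where k: "k = (a, b)" by fastforce
  have a: "\<bar>a\<bar> \<le> norm k" using norm_fst_le[of a b] k by simp
  have b: "\<bar>b\<bar> \<le> norm k" using norm_snd_le[of b a] k by simp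
  have o: "0 \<le> onorm RJ" using onorm_pos_le[OF RJ_bl] .
  have "norm (Dop RJ k w) \<le> \<bar>a\<bar> * norm w + \<bar>b\<bar> * norm (RJ w)"
    unfolding Dop_def k using norm_triangle_ineq[of "a *\<^sub>R w" "b *\<^sub>R RJ w"] by simp
  also have "\<dots> \<le> norm k * norm w + norm k * (onorm RJ * norm w)"
    using a b onorm[OF RJ_bl, of w] by (intro add_mono mult_mono) auto
  also have "\<dots> = ((1 + onorm RJ) * norm k) * norm w" by (simp add: algebra_simps)
  finally show ?thesis .
qed

lemma loc:
  assumes g: "goodz RJ T Rs z"
  shows "\<exists>e>0. \<exists>M>0. (\<forall>w. norm (inv (Aop RJ T z) w) \<le> M * norm w) \<and>
     (\<forall>z'. dist z' z < e \<longrightarrow> goodz RJ T Rs z' \<and> (\<forall>w. norm (inv (Aop RJ T z') w) \<le> 2 * M * norm w) \<and>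
        (\<forall>w. inv (Aop RJ T z') w = inv (Aop RJ T z) w - inv (Aop RJ T z') (Dop RJ (z' - z) (inv (Aop RJ T z) w))))"
proof -
  define S where "S = inv (Aop RJ T z)"
  have inv: "invertible_op (Aop RJ T z)" using g by (simp add: goodz_def)
  note Sf = inv_facts[OF inv, folded S_def]
  have lS: "linear S" using Sf(1) bounded_linear.linear by blast
  obtain M where M: "M > 0" "\<And>w. norm (S w) \<le> M * norm w"
    using bounded_linear.pos_bounded[OF Sf(1)] by (auto simp: mult.commute)
  define c where "c = 1 + onorm RJ"
  have c: "c > 0" using onorm_pos_le[OF RJ_bl] by (simp add: c_def)
  define e where "e = 1 / (2 * M * c)"
  have e: "e > 0" using M c by (simp add: e_def)
  define G where "G = {u. \<forall>n. (S ^^ n) (RJ u) = RJ ((S ^^ n) u)}"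
  have lSn: "linear (S ^^ n)" for n using bl_pow[OF Sf(1)] bounded_linear.linear by blast
  have S1: "S (RJ u) = RJ (S u)" if "u \<in> G" for u
  proof -
    have "(S ^^ Suc 0) (RJ u) = RJ ((S ^^ Suc 0) u)" using that unfolding G_def by blast
    then show ?thesis by simp
  qed
  have closedG: "closed G"
  proof -
    have "G = (\<Inter>n. {u. (S ^^ n) (RJ u) = RJ ((S ^^ n) u)})" unfolding G_def by auto
    moreover have "closed {u. (S ^^ n) (RJ u) = RJ ((S ^^ n) u)}" for n
      by (intro closed_Collect_eq linear_continuous_on bounded_linear_compose[OF bl_pow[OF Sf(1)] RJ_bl]
          bounded_linear_compose[OF RJ_bl bl_pow[OF Sf(1)]])
    ultimately show ?thesis by auto
  qed
  have subG: "subspace G"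
    unfolding subspace_def G_def
    by (simp add: linear_0[OF lSn] linear_0[OF lRJ] linear_add[OF lSn] linear_add[OF lRJ]
        linear_scale[OF lSn] linear_scale[OF lRJ])
  have RJG: "RJ u \<in> G" if "u \<in> G" for u
    using that unfolding G_def by (simp add: RJJ linear_neg[OF lSn] linear_neg[OF lRJ])
  have SG: "S u \<in> G" if "u \<in> G" for u
  proof -
    have "(S ^^ n) (RJ (S u)) = RJ ((S ^^ n) (S u))" for n
    proof -
      have "(S ^^ n) (RJ (S u)) = (S ^^ Suc n) (RJ u)" using S1[OF that] by (simp only: funpow_Suc_right o_apply)
      also have "\<dots> = RJ ((S ^^ Suc n) u)" using that unfolding G_def by blast
      finally show ?thesis by (simp only: funpow_Suc_right o_apply)
    qed
    then show ?thesis unfolding G_def by blast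
  qed
  have ReG: "w \<in> G" if "w \<in> Rs" for w
  proof -
    have "(S ^^ n) (RJ w) = RJ ((S ^^ n) w)" for n
    proof (cases "n = 0")
      case True then show ?thesis by simp
    next
      case False then show ?thesis using g that unfolding goodz_def S_def by auto
    qed
    then show ?thesis unfolding G_def by blast
  qed
  have DG: "Dop RJ k u \<in> G" if "u \<in> G" for u k
    unfolding Dop_def using that RJG subG by (intro subspace_add subspace_scale) auto
  have part1: "\<forall>w. norm (inv (Aop RJ T z) w) \<le> M * norm w" using M(2) by (simp add: S_def)
  have part2: "goodz RJ T Rs z' \<and> (\<forall>w. norm (inv (Aop RJ T z') w) \<le> 2 * M * norm w) \<and>
        (\<forall>w. inv (Aop RJ T z') w = inv (Aop RJ T z) w - inv (Aop RJ T z') (Dop RJ (z' - z) (inv (Aop RJ T z) w)))"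
    if dz: "dist z' z < e" for z'
  proof -
    define D where "D = Dop RJ (z' - z)"
    define d where "d = c * norm (z' - z)"
    have d0: "0 \<le> d" using c by (simp add: d_def)
    have Dd: "norm (D w) \<le> d * norm w" for w using Dop_bound[of "z' - z" w] by (simp add: D_def d_def c_def)
    have Md: "M * d \<le> 1/2"
    proof -
      have "M * d = (M * c) * dist z' z" by (simp add: d_def dist_norm)
      also have "\<dots> \<le> (M * c) * e" using dz M c by (intro mult_left_mono) auto
      also have "\<dots> = 1/2" using M c by (simp add: e_def)
      finally show ?thesis .
    qed
    have A': "Aop RJ T z' = (\<lambda>w. Aop RJ T z w + D w)" unfolding D_def by (rule Aop_shift)
    note P = pert[OF Aop_bl Sf(1) Sf(2) Sf(3) Dop_bl[of "z' - z"], folded D_def A', OF M(2) Dd Md _ d0]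
    have Minv: "invertible_op (Aop RJ T z')" using P(1) M(1) A' by simp
    define S' where "S' = inv (Aop RJ T z')"
    note S'f = inv_facts[OF Minv, folded S'_def]
    have lS': "linear S'" using S'f(1) bounded_linear.linear by blast
    have lD: "linear D" using Dop_bl bounded_linear.linear D_def by blast
    have uniq: "u = S' y" if "u = S y - S (D u)" for u y using P(3)[OF _ that] M(1) A' by (simp add: S'_def)
    have S'G: "S' y \<in> G \<and> S' (RJ y) = RJ (S' y)" if y: "y \<in> G" for y
    proof -
      obtain u where u: "u \<in> G" "u = S y - S (D u)"
        using fix_in[OF lS lD M(2) Dd Md _ d0 closedG subG SG _ y] M(1) DG unfolding D_def by auto
      have "RJ u = S (RJ y) - S (D (RJ u))"
      proof -
        have "RJ u = RJ (S y) - RJ (S (D u))" using u(2) linear_diff[OF lRJ] by metis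
        also have "\<dots> = S (RJ y) - S (RJ (D u))" using S1[OF y] S1[OF DG[OF u(1)]] D_def by simp
        also have "\<dots> = S (RJ y) - S (D (RJ u))" using Dop_RJ D_def by simp
        finally show ?thesis .
      qed
      then show ?thesis using uniq[OF u(2)] uniq[of "RJ u" "RJ y"] u(1) by simp
    qed
    have pw: "(S' ^^ n) w \<in> G \<and> (S' ^^ n) (RJ w) = RJ ((S' ^^ n) w)" if "w \<in> G" for w n
    proof (induction n)
      case 0 then show ?case using that by simp
    next
      case (Suc n) then show ?case using S'G by simp
    qed
    have r1: "goodz RJ T Rs z'" unfolding goodz_def using Minv pw ReG by (auto simp: S'_def)
    have r2: "norm (inv (Aop RJ T z') w) \<le> 2 * M * norm w" for w using P(2) M(1) A' by simp
    have r3: "inv (Aop RJ T z') w = inv (Aop RJ T z) w - inv (Aop RJ T z') (Dop RJ (z' - z) (inv (Aop RJ T z) w))" for w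
    proof -
      have "Aop RJ T z' (S w) = w + D (S w)" using A' Sf(3) by simp
      then have "S w = S' w + S' (D (S w))" using S'f(2)[of "S w"] linear_add[OF lS'] by metis
      then show ?thesis by (simp add: S'_def S_def D_def algebra_simps)
    qed
    show ?thesis using r1 r2 r3 by blast
  qed
  show ?thesis using e M(1) part1 part2 by blast
qed

lemma open_good: "open {z. goodz RJ T Rs z}"
  unfolding open_dist
proof
  fix z assume "z \<in> {z. goodz RJ T Rs z}"
  then obtain e where "e > 0" "\<forall>z'. dist z' z < e \<longrightarrow> goodz RJ T Rs z'" using loc by blast
  then show "\<exists>e>0. \<forall>y. dist y z < e \<longrightarrow> y \<in> {z. goodz RJ T Rs z}" by auto
qed

lemma cont_app:
  assumes g: "goodz RJ T Rs z" and f: "isCont f z"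
  shows "isCont (\<lambda>z'. inv (Aop RJ T z') (f z')) z"
proof -
  obtain e M where e: "e > 0" and M: "M > 0" and SM: "\<forall>w. norm (inv (Aop RJ T z) w) \<le> M * norm w"
    and L: "\<forall>z'. dist z' z < e \<longrightarrow> goodz RJ T Rs z' \<and> (\<forall>w. norm (inv (Aop RJ T z') w) \<le> 2 * M * norm w) \<and>
        (\<forall>w. inv (Aop RJ T z') w = inv (Aop RJ T z) w - inv (Aop RJ T z') (Dop RJ (z' - z) (inv (Aop RJ T z) w)))"
    using loc[OF g] by blast
  define c where "c = 1 + onorm RJ"
  define B where "B z' = 2 * M * norm (f z' - f z) + 2 * M * (c * norm (z' - z) * (M * norm (f z)))" for z'
  have "((\<lambda>z'. inv (Aop RJ T z') (f z') - inv (Aop RJ T z) (f z)) \<longlongrightarrow> 0) (at z)"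
  proof (rule Lim_null_comparison)
    show "eventually (\<lambda>z'. norm (inv (Aop RJ T z') (f z') - inv (Aop RJ T z) (f z)) \<le> B z') (at z)"
    proof -
    have key: "norm (inv (Aop RJ T z') (f z') - inv (Aop RJ T z) (f z)) \<le> B z'" if dz: "dist z' z < e" for z'
    proof -
      have Lz: "goodz RJ T Rs z' \<and> (\<forall>w. norm (inv (Aop RJ T z') w) \<le> 2 * M * norm w) \<and>
        (\<forall>w. inv (Aop RJ T z') w = inv (Aop RJ T z) w - inv (Aop RJ T z') (Dop RJ (z' - z) (inv (Aop RJ T z) w)))"
        using L dz by blast
      have L': "goodz RJ T Rs z'" "\<And>w. norm (inv (Aop RJ T z') w) \<le> 2 * M * norm w"
        "\<And>w. inv (Aop RJ T z') w = inv (Aop RJ T z) w - inv (Aop RJ T z') (Dop RJ (z' - z) (inv (Aop RJ T z) w))"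
        using Lz by blast+
      have lS': "linear (inv (Aop RJ T z'))"
        using inv_facts(1) L'(1) goodz_def bounded_linear.linear by blast
      have "inv (Aop RJ T z') (f z') - inv (Aop RJ T z) (f z)
          = inv (Aop RJ T z') (f z' - f z) - inv (Aop RJ T z') (Dop RJ (z' - z) (inv (Aop RJ T z) (f z)))"
      proof -
        have A: "inv (Aop RJ T z') (f z) = inv (Aop RJ T z) (f z) - inv (Aop RJ T z') (Dop RJ (z' - z) (inv (Aop RJ T z) (f z)))"
          using L'(3)[of "f z"] .
        have B: "inv (Aop RJ T z') (f z' - f z) = inv (Aop RJ T z') (f z') - inv (Aop RJ T z') (f z)"
          using linear_diff[OF lS', of "f z'" "f z"] .
        show ?thesis unfolding B A by (simp add: algebra_simps)
      qed
      then have "norm (inv (Aop RJ T z') (f z') - inv (Aop RJ T z) (f z))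
          \<le> norm (inv (Aop RJ T z') (f z' - f z)) + norm (inv (Aop RJ T z') (Dop RJ (z' - z) (inv (Aop RJ T z) (f z))))"
        by (metis norm_triangle_ineq4)
      also have "\<dots> \<le> 2 * M * norm (f z' - f z) + 2 * M * norm (Dop RJ (z' - z) (inv (Aop RJ T z) (f z)))"
        using L'(2) by (intro add_mono) auto
      also have "norm (Dop RJ (z' - z) (inv (Aop RJ T z) (f z))) \<le> c * norm (z' - z) * (M * norm (f z))"
      proof -
        have "norm (Dop RJ (z' - z) (inv (Aop RJ T z) (f z))) \<le> c * norm (z' - z) * norm (inv (Aop RJ T z) (f z))"
          using Dop_bound by (simp add: c_def)
        also have "\<dots> \<le> c * norm (z' - z) * (M * norm (f z))"
          using SM onorm_pos_le[OF RJ_bl] by (intro mult_left_mono) (auto simp: c_def)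
        finally show ?thesis .
      qed
      finally show ?thesis
        using M by (simp add: B_def)
    qed
    show ?thesis unfolding eventually_at using e key by (auto intro!: exI[of _ e])
    qed
    have "(B \<longlongrightarrow> B z) (at z)" unfolding B_def using f
      by (intro tendsto_intros) (auto simp: isCont_def)
    then show "(B \<longlongrightarrow> 0) (at z)" by (simp add: B_def)
  qed
  then show ?thesis by (simp add: isCont_def LIM_zero_iff)
qed

lemma deriv_res:
  assumes g: "goodz RJ T Rs z"
  shows "((\<lambda>z'. inv (Aop RJ T z') v) has_derivative
          (\<lambda>k. - inv (Aop RJ T z) (Dop RJ k (inv (Aop RJ T z) v)))) (at z)"
proof -
  obtain e M where e: "e > 0" and M: "M > 0" and SM: "\<forall>w. norm (inv (Aop RJ T z) w) \<le> M * norm w"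
    and L: "\<forall>z'. dist z' z < e \<longrightarrow> goodz RJ T Rs z' \<and> (\<forall>w. norm (inv (Aop RJ T z') w) \<le> 2 * M * norm w) \<and>
        (\<forall>w. inv (Aop RJ T z') w = inv (Aop RJ T z) w - inv (Aop RJ T z') (Dop RJ (z' - z) (inv (Aop RJ T z) w)))"
    using loc[OF g] by blast
  define S where "S = inv (Aop RJ T z)"
  have bS: "bounded_linear S" using inv_facts(1) g goodz_def S_def by blast
  define c where "c = 1 + onorm RJ"
  have c: "c \<ge> 0" using onorm_pos_le[OF RJ_bl] by (simp add: c_def)
  have Db: "norm (Dop RJ k w) \<le> c * norm k * norm w" for k w using Dop_bound by (simp add: c_def)
  have bL: "bounded_linear (\<lambda>k. - S (Dop RJ k (S v)))"
  proof -
    have "(\<lambda>k. - S (Dop RJ k (S v))) = (\<lambda>k. - S (fst k *\<^sub>R S v + snd k *\<^sub>R RJ (S v)))"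
      by (simp add: Dop_def)
    moreover have "bounded_linear (\<lambda>k::real\<times>real. fst k *\<^sub>R S v + snd k *\<^sub>R RJ (S v))"
      by (intro bounded_linear_add bounded_linear_compose[OF bounded_linear_scaleR_left bounded_linear_fst]
          bounded_linear_compose[OF bounded_linear_scaleR_left bounded_linear_snd])
    ultimately show ?thesis
      using bounded_linear_minus[OF bounded_linear_compose[OF bS]] by metis
  qed
  show ?thesis unfolding S_def[symmetric]
  proof (rule deriv_from_quad[OF bL e, where C = "2 * M * c * c * M * M * norm v"])
    fix h :: "real \<times> real" assume h: "norm h < e"
    define z' where "z' = z + h"
    have "dist z' z < e" using h by (simp add: z'_def dist_norm)
    then have Lz: "goodz RJ T Rs z' \<and> (\<forall>w. norm (inv (Aop RJ T z') w) \<le> 2 * M * norm w) \<and>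
        (\<forall>w. inv (Aop RJ T z') w = inv (Aop RJ T z) w - inv (Aop RJ T z') (Dop RJ (z' - z) (inv (Aop RJ T z) w)))"
      using L by blast
    have hz: "z' - z = h" by (simp add: z'_def)
    have L': "goodz RJ T Rs z'" "\<And>w. norm (inv (Aop RJ T z') w) \<le> 2 * M * norm w"
        "\<And>w. inv (Aop RJ T z') w = S w - inv (Aop RJ T z') (Dop RJ h (S w))"
      using Lz unfolding hz S_def by blast+
    define x where "x = Dop RJ h (S v)"
    have "inv (Aop RJ T z') v - S v - - S (Dop RJ h (S v)) = S x - inv (Aop RJ T z') x"
      using L'(3)[of v] by (simp add: x_def)
    also have "\<dots> = inv (Aop RJ T z') (Dop RJ h (S x))" using L'(3)[of x] by simp
    finally have eq: "inv (Aop RJ T z') v - S v - - S (Dop RJ h (S v)) = inv (Aop RJ T z') (Dop RJ h (S x))" .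
    have "norm (inv (Aop RJ T z') (Dop RJ h (S x))) \<le> 2 * M * (c * norm h * (M * (c * norm h * (M * norm v))))"
    proof -
      have "norm (S v) \<le> M * norm v" using SM S_def by simp
      then have "norm x \<le> c * norm h * (M * norm v)" unfolding x_def
        using Db[of h "S v"] c by (meson mult_left_mono order_trans norm_ge_zero zero_le_mult_iff)
      then have "norm (S x) \<le> M * (c * norm h * (M * norm v))"
        using SM S_def M by (metis mult_left_mono order_trans less_imp_le)
      then have "norm (Dop RJ h (S x)) \<le> c * norm h * (M * (c * norm h * (M * norm v)))"
        using Db[of h "S x"] c by (meson mult_left_mono order_trans norm_ge_zero zero_le_mult_iff)
      then show ?thesis using L'(2)[of "Dop RJ h (S x)"] M
        by (meson mult_left_mono order_trans less_imp_le zero_le_mult_iff zero_le_numeral)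
    qed
    then show "norm (inv (Aop RJ T (z + h)) v - inv (Aop RJ T z) v - - S (Dop RJ h (S v))) \<le> 2 * M * c * c * M * M * norm v * (norm h)\<^sup>2"
      using eq by (simp add: z'_def power2_eq_square mult_ac S_def[symmetric])
  qed
qed

end

theorem mainTheorem8:
  fixes lm :: "oct \<Rightarrow> 'v::banach \<Rightarrow> 'v" and rm :: "'v \<Rightarrow> oct \<Rightarrow> 'v"
    and T :: "'v \<Rightarrow> 'v" and v :: 'v and \<phi> :: "'v \<Rightarrow> oct" and J :: oct
    and g :: "oct \<Rightarrow> oct"
  assumes "banach_oct_bimodule lm rm"
    and "T \<in> BRO lm rm"
    and "v \<in> ReM lm rm"
    and "\<phi> \<in> oct_dual lm rm"
    and "\<forall>s\<in>rho lm rm T. g s = \<phi> (circ_inv lm rm (\<lambda>w. rm w s - T w) v)"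
    and "J \<in> osphere"
  shows "open {(x, y). x *\<^sub>R oone + y *\<^sub>R J \<in> rhoJ lm rm T J} \<and>
    (\<exists>G' :: real \<times> real \<Rightarrow> (real \<times> real) \<Rightarrow>\<^sub>L oct.
       (\<forall>z\<in>{(x, y). x *\<^sub>R oone + y *\<^sub>R J \<in> rhoJ lm rm T J}.
          ((\<lambda>(x, y). g (x *\<^sub>R oone + y *\<^sub>R J)) has_derivative blinfun_apply (G' z)) (at z)) \<and>
       continuous_on {(x, y). x *\<^sub>R oone + y *\<^sub>R J \<in> rhoJ lm rm T J} G' \<and>
       (\<forall>z\<in>{(x, y). x *\<^sub>R oone + y *\<^sub>R J \<in> rhoJ lm rm T J}.
          G' z (1, 0) + omul (G' z (0, 1)) J = 0))"
proof -
  note bob = assms(1)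
  have bm: "oct_bimodule lm rm" using bob unfolding banach_oct_bimodule_def by blast
  have nrm: "norm (rm x p) = norm p * norm x" for x p using bob unfolding banach_oct_bimodule_def by blast
  have JJ: "omul J J = - oone" using assms(6) by (simp add: osphere_def)
  have T_bl: "bounded_linear T" using assms(2) by (simp add: BRO_def)
  have phi_bl: "bounded_linear \<phi>" using assms(4) by (simp add: oct_dual_def)
  have phi_r: "\<phi> (rm x p) = omul (\<phi> x) p" for x p using assms(4) unfolding oct_dual_def by blast
  define RJ where "RJ = (\<lambda>w. rm w J)"
  have RJ_bl: "bounded_linear RJ"
    unfolding RJ_def
    by (rule bounded_linear_intro[where K="norm J"])
       (auto simp: linear_add[OF lin_rm1[OF bm]] linear_scale[OF lin_rm1[OF bm]] nrm mult.commute)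
  have RJJ: "RJ (RJ w) = - w" for w
    unfolding RJ_def rmJJ[OF bm] JJ using linear_neg[OF lin_rm2[OF bm]] rm_one[OF bm] by metis
  interpret R: resolv RJ T "ReM lm rm" by (rule resolv.intro[OF RJ_bl RJJ T_bl])
  have rmS: "rm w (x *\<^sub>R oone + y *\<^sub>R J) = x *\<^sub>R w + y *\<^sub>R RJ w" for w x y
    unfolding RJ_def by (simp add: linear_add[OF lin_rm2[OF bm]] linear_scale[OF lin_rm2[OF bm]] rm_one[OF bm])
  have Aeq: "(\<lambda>w. rm w (x *\<^sub>R oone + y *\<^sub>R J) - T w) = Aop RJ T (x, y)" for x y
    by (rule ext) (simp add: rmS Aop_def)
  have memU: "(x *\<^sub>R oone + y *\<^sub>R J \<in> rhoJ lm rm T J) \<longleftrightarrow> goodz RJ T (ReM lm rm) (x, y)" for x y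
  proof
    assume h: "x *\<^sub>R oone + y *\<^sub>R J \<in> rhoJ lm rm T J"
    then have h2: "invertible_op (\<lambda>w. rm w (x *\<^sub>R oone + y *\<^sub>R J) - T w) \<and>
       CJ_ext_pow_assoc lm rm J (inv (\<lambda>w. rm w (x *\<^sub>R oone + y *\<^sub>R J) - T w))"
      unfolding rhoJ_def by blast
    then have inv: "invertible_op (Aop RJ T (x, y))" and
      ce: "CJ_ext_pow_assoc lm rm J (inv (Aop RJ T (x, y)))"
      by (simp_all only: Aeq)
    have JC: "J \<in> CJ J" unfolding CJ_def
      by (rule CollectI, rule exI[of _ 0], rule exI[of _ 1]) simp
    show "goodz RJ T (ReM lm rm) (x, y)"
      unfolding goodz_def using inv ce JC unfolding CJ_ext_pow_assoc_def RJ_def by blast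
  next
    assume h: "goodz RJ T (ReM lm rm) (x, y)"
    then have inv: "invertible_op (Aop RJ T (x, y))" by (simp add: goodz_def)
    define S where "S = inv (Aop RJ T (x, y))"
    have lSn: "linear (S ^^ n)" for n
      using bl_pow[OF inv_facts(1)[OF inv]] bounded_linear.linear S_def by blast
    have "CJ_ext_pow_assoc lm rm J S"
      unfolding CJ_ext_pow_assoc_def
    proof (intro allI impI ballI)
      fix n :: nat and w c assume n: "1 \<le> n" and w: "w \<in> ReM lm rm" and c: "c \<in> CJ J"
      obtain a b where cab: "c = a *\<^sub>R oone + b *\<^sub>R J" using c unfolding CJ_def by blast
      have com: "(S ^^ n) (RJ w) = RJ ((S ^^ n) w)" using h n w unfolding goodz_def S_def by blast
      show "(S ^^ n) (rm w c) = rm ((S ^^ n) w) c"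
        unfolding cab rmS using com by (simp add: linear_add[OF lSn] linear_scale[OF lSn])
    qed
    moreover have "x *\<^sub>R oone + y *\<^sub>R J \<in> CJ J" unfolding CJ_def by blast
    ultimately show "x *\<^sub>R oone + y *\<^sub>R J \<in> rhoJ lm rm T J"
      unfolding rhoJ_def mem_Collect_eq Aeq using inv S_def by blast
  qed
  define U where "U = {(x, y). x *\<^sub>R oone + y *\<^sub>R J \<in> rhoJ lm rm T J}"
  have Ueq: "U = {z. goodz RJ T (ReM lm rm) z}"
    unfolding U_def using memU by auto
  have openU: "open U" unfolding Ueq by (rule R.open_good)
  have gval: "(\<lambda>(x, y). g (x *\<^sub>R oone + y *\<^sub>R J)) z = \<phi> (inv (Aop RJ T z) v)" if z: "z \<in> U" for z
  proof -
    obtain x y where zxy: "z = (x, y)" by fastforce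
    have s: "x *\<^sub>R oone + y *\<^sub>R J \<in> rhoJ lm rm T J" using z zxy U_def by simp
    then have "x *\<^sub>R oone + y *\<^sub>R J \<in> rho lm rm T" unfolding rho_def using assms(6) by blast
    then have "g (x *\<^sub>R oone + y *\<^sub>R J) = \<phi> (circ_inv lm rm (\<lambda>w. rm w (x *\<^sub>R oone + y *\<^sub>R J) - T w) v)"
      using assms(5) by blast
    then have gs: "g (x *\<^sub>R oone + y *\<^sub>R J) = \<phi> (circ_inv lm rm (Aop RJ T (x, y)) v)"
      by (simp only: Aeq)
    have inv: "invertible_op (Aop RJ T (x, y))" using s memU by (simp add: goodz_def)
    have l: "linear (inv (Aop RJ T (x, y)))" using inv_facts(1)[OF inv] bounded_linear.linear by blast
    have "circ_inv lm rm (Aop RJ T (x, y)) v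
        = (\<Sum>i<8. rm (inv (Aop RJ T (x, y)) (if i = 0 then v else 0)) (oe i))"
      unfolding circ_inv_def ext_op_def comps_Re[OF bm assms(3)] ..
    also have "\<dots> = (\<Sum>i<(8::nat). if i = 0 then inv (Aop RJ T (x, y)) v else 0)"
      by (rule sum.cong) (auto simp: linear_0[OF l] linear_0[OF lin_rm1[OF bm]] oe0 rm_one[OF bm])
    also have "\<dots> = inv (Aop RJ T (x, y)) v" by simp
    finally show ?thesis using gs zxy by simp
  qed
  define P where "P z = \<phi> (inv (Aop RJ T z) (inv (Aop RJ T z) v))" for z
  define Q where "Q z = \<phi> (inv (Aop RJ T z) (RJ (inv (Aop RJ T z) v)))" for z
  define G' where "G' z = Blinfun (\<lambda>k::real\<times>real. - (fst k *\<^sub>R P z + snd k *\<^sub>R Q z))" for z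
  have blG: "bounded_linear (\<lambda>k::real\<times>real. - (fst k *\<^sub>R P z + snd k *\<^sub>R Q z))" for z
    by (intro bounded_linear_minus bounded_linear_add bounded_linear_compose[OF bounded_linear_scaleR_left bounded_linear_fst]
          bounded_linear_compose[OF bounded_linear_scaleR_left bounded_linear_snd])
  have G'app: "blinfun_apply (G' z) = (\<lambda>k. - (fst k *\<^sub>R P z + snd k *\<^sub>R Q z))" for z
    unfolding G'_def using bounded_linear_Blinfun_apply[OF blG] .
  have deriv: "((\<lambda>(x, y). g (x *\<^sub>R oone + y *\<^sub>R J)) has_derivative blinfun_apply (G' z)) (at z)" if z: "z \<in> U" for z
  proof -
    have gz: "goodz RJ T (ReM lm rm) z" using z Ueq by simp
    define S where "S = inv (Aop RJ T z)"
    have lS: "linear S" using inv_facts(1) gz goodz_def bounded_linear.linear S_def by blast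
    have lphi: "linear \<phi>" using phi_bl bounded_linear.linear by blast
    have d1: "((\<lambda>z'. \<phi> (inv (Aop RJ T z') v)) has_derivative (\<lambda>k. \<phi> (- S (Dop RJ k (S v))))) (at z)"
      using bounded_linear.has_derivative[OF phi_bl R.deriv_res[OF gz, of v]] by (simp add: S_def)
    have "(\<lambda>k. \<phi> (- S (Dop RJ k (S v)))) = blinfun_apply (G' z)"
      unfolding G'app P_def Q_def S_def[symmetric]
      by (rule ext) (simp add: Dop_def linear_add[OF lS] linear_scale[OF lS] linear_neg[OF lS]
            linear_add[OF lphi] linear_scale[OF lphi] linear_neg[OF lphi] linear_diff[OF lphi] linear_diff[OF lS])
    then have d2: "((\<lambda>z'. \<phi> (inv (Aop RJ T z') v)) has_derivative blinfun_apply (G' z)) (at z)"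
      using d1 by simp
    show ?thesis
      by (rule has_derivative_transform_within_open[OF d2 openU z]) (simp add: gval)
  qed
  have contP: "isCont P z" and contQ: "isCont Q z" if z: "z \<in> U" for z
  proof -
    have gz: "goodz RJ T (ReM lm rm) z" using z Ueq by simp
    have c0: "isCont (\<lambda>z'. inv (Aop RJ T z') v) z"
      using R.cont_app[OF gz, of "\<lambda>_. v"] by simp
    have c1: "isCont (\<lambda>z'. inv (Aop RJ T z') (inv (Aop RJ T z') v)) z"
      using R.cont_app[OF gz c0] .
    have c2: "isCont (\<lambda>z'. inv (Aop RJ T z') (RJ (inv (Aop RJ T z') v))) z"
      using R.cont_app[OF gz isCont_o2[OF c0 linear_continuous_at[OF RJ_bl]]] .
    show "isCont P z" unfolding P_def using isCont_o2[OF c1 linear_continuous_at[OF phi_bl]] .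
    show "isCont Q z" unfolding Q_def using isCont_o2[OF c2 linear_continuous_at[OF phi_bl]] .
  qed
  have contG: "continuous_on U G'"
  proof (rule continuous_on_blinfun_componentwise)
    fix i :: "real \<times> real" assume "i \<in> Basis"
    have "continuous_on U P" "continuous_on U Q"
      using contP contQ by (auto intro!: continuous_at_imp_continuous_on)
    then show "continuous_on U (\<lambda>z. blinfun_apply (G' z) i)"
      unfolding G'app by (intro continuous_intros)
  qed
  have CR: "G' z (1, 0) + omul (G' z (0, 1)) J = 0" if z: "z \<in> U" for z
  proof -
    have gz: "goodz RJ T (ReM lm rm) z" using z Ueq by simp
    define S where "S = inv (Aop RJ T z)"
    have c1: "(S ^^ 1) (RJ v) = RJ ((S ^^ 1) v)" and c2: "(S ^^ 2) (RJ v) = RJ ((S ^^ 2) v)"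
      using gz assms(3) unfolding goodz_def S_def by auto
    have e1: "S (RJ v) = RJ (S v)" using c1 by simp
    have e2: "S (S (RJ v)) = RJ (S (S v))" using c2 by (simp add: numeral_2_eq_2)
    have "Q z = omul (P z) J"
      unfolding P_def Q_def S_def[symmetric] using e1 e2 by (simp add: RJ_def phi_r)
    then show ?thesis
      by (simp add: G'app omul_minus_left omul_alt JJ omul_minus_one)
  qed
  show ?thesis
    using openU deriv contG CR unfolding U_def by blast
qed

end
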